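(* Let $\mathcal{C}$ be an exact-repair regenerating code with parameters $\{(n=d+1,k,d),(\alpha,\beta),B\}$, where $\alpha=(d-p+1)\beta-\theta$ with $p\in\{1,\dots,k\}$, $\theta\in[0,\beta)$ ($\theta=0$ if $p=k$), and let $\epsilon=\hat B-B$. Let $1\le i\le j\le k$, $L=[i\ j]$, and $$\mathcal{S}=\{S_{i+1}^{i}\}\cup S_{i+2}^{[i\ i+1]}\cup\cdots\cup S_{j}^{[i\ j-1]}\cup S_{[j+1\ d+1]}^{L},$$ i.e. $\mathcal{S}=\{S_x^y : y\in L,\ x\in[d+1],\ x>y\}$. Then $$H(\mathcal{S})\ \ge\ \sum_{\ell=i}^{j}\min\{\alpha,(d-\ell+1)\beta\}-\epsilon .$$
   Context: Setting: fix integers $1\le k\le d$, let $n=d+1$, a finite field $\mathbb{F}_q$, and reals $\alpha,\beta>0$. An exact-repair regenerating code with parameters $\{(n,k,d),(\alpha,\beta),B\}$: a file $M$ uniformly distributed over $\mathbb{F}_q^B$ (entropies are measured in units of $\log q$); node $i\in[n]$ stores $W_i$, a deterministic function of $M$, with $H(W_i)\le\alpha$; (data collection) for every $K\subseteq[n]$ with $|K|=k$, $M$ is a function of $(W_a)_{a\in K}$; (exact repair) since $n=d+1$, the helper set of node $y$ is $[n]\setminus\{y\}$: each $x\ne y$ sends helper data $S_x^y$, a deterministic function of $W_x$ with $H(S_x^y)\le\beta$, and $W_y$ is a function of $(S_x^y)_{x\neq y}$. Notation: $[i]=\{1,\dots,i\}$, $[i\ j]=\{i,i+1,\dots,j\}$;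 for $A\subseteq[n]$, $W_A=(W_a)_{a\in A}$; for $X,Y\subseteq[n]$, $S_X^Y=\{S_x^y: x\in X, y\in Y, x\ne y\}$; $S_x^Y=S_{\{x\}}^Y$. The functional-repair optimal file size is $\hat B=\sum_{i=1}^k\min\{\alpha,(d-i+1)\beta\}=p\alpha+\sum_{i=p+1}^k(d-i+1)\beta$, and $\epsilon:=\hat B-B$. *)

theory Defs
  imports Complex_Main
begin

text \<open>Message space: the file M is uniformly distributed over F_q^B, modelled as
  the set of lists of length B over a finite field 'f (q = card UNIV).\<close>

definition msgs :: "nat \<Rightarrow> 'f list set" where
  "msgs B = {xs. length xs = B}"

text \<open>Probability that the random variable X (a deterministic function of the
  uniformly distributed file) takes value a.\<close>

definition prb :: "'f::{field,finite} list set \<Rightarrow> ('f list \<Rightarrow> 'a) \<Rightarrow> 'a \<Rightarrow> real" where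
  "prb Ms X a = real (card {m \<in> Ms. X m = a}) / real (card Ms)"

definition ent :: "'f::{field,finite} list set \<Rightarrow> ('f list \<Rightarrow> 'a) \<Rightarrow> real" where
  "ent Ms X = - (\<Sum>a \<in> X ` Ms. prb Ms X a * log (real (card (UNIV :: 'f set))) (prb Ms X a))"

definition joint :: "'i set \<Rightarrow> ('i \<Rightarrow> 'm \<Rightarrow> 'a) \<Rightarrow> 'm \<Rightarrow> ('i \<Rightarrow> 'a)" where
  "joint I X = (\<lambda>m. \<lambda>i. if i \<in> I then X i m else undefined)"

text \<open>Exact-repair regenerating code with n = d+1 nodes labelled 1..d+1.
  W i: content of node i; S x y: helper data sent from node x to repair node y.\<close>

definition ER_code ::
  "nat \<Rightarrow> nat \<Rightarrow> real \<Rightarrow> real \<Rightarrow> nat \<Rightarrow>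
   (nat \<Rightarrow> 'f::{field,finite} list \<Rightarrow> 'w) \<Rightarrow> (nat \<Rightarrow> nat \<Rightarrow> 'f list \<Rightarrow> 's) \<Rightarrow> bool" where
  "ER_code k d \<alpha> \<beta> B W S \<longleftrightarrow>
     (let Ms = msgs B; N = {1..d+1} in
       (\<forall>i \<in> N. ent Ms (W i) \<le> \<alpha>) \<and>
       (\<forall>K \<subseteq> N. card K = k \<longrightarrow>
          (\<forall>m \<in> Ms. \<forall>m' \<in> Ms. (\<forall>a \<in> K. W a m = W a m') \<longrightarrow> m = m')) \<and>
       (\<forall>x \<in> N. \<forall>y \<in> N. x \<noteq> y \<longrightarrow>
          (\<forall>m \<in> Ms. \<forall>m' \<in> Ms. W x m = W x m' \<longrightarrow> S x y m = S x y m') \<and>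
          ent Ms (S x y) \<le> \<beta>) \<and>
       (\<forall>y \<in> N. \<forall>m \<in> Ms. \<forall>m' \<in> Ms.
          (\<forall>x \<in> N - {y}. S x y m = S x y m') \<longrightarrow> W y m = W y m'))"

text \<open>Functional-repair optimal file size.\<close>

definition Bhat :: "nat \<Rightarrow> nat \<Rightarrow> real \<Rightarrow> real \<Rightarrow> real" where
  "Bhat k d \<alpha> \<beta> = (\<Sum>i = 1..k. min \<alpha> ((real d - real i + 1) * \<beta>))"

end

theory Submission
  imports Defs
begin


definition cnt :: "'m set \<Rightarrow> ('m \<Rightarrow> 'a) \<Rightarrow> 'm \<Rightarrow> nat" where
  "cnt Ms X m = card {m'\<in>Ms. X m' = X m}"

lemma cnt_pos: "finite Ms \<Longrightarrow> m \<in> Ms \<Longrightarrow> 1 \<le> cnt Ms X m"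
  unfolding cnt_def using card_gt_0_iff[of "{m'\<in>Ms. X m' = X m}"] by auto

lemma q_ge2: "2 \<le> card (UNIV :: 'f::{field,finite} set)"
proof -
  have "card {0::'f, 1} = 2" by simp
  moreover have "card {0::'f, 1} \<le> card (UNIV :: 'f set)" by (rule card_mono) auto
  ultimately show ?thesis by simp
qed

lemma ent_alt:
  fixes Ms :: "'f::{field,finite} list set"
  assumes fin: "finite Ms" and ne: "Ms \<noteq> {}"
  shows "ent Ms X = (\<Sum>m\<in>Ms. ln (card Ms) - ln (cnt Ms X m)) / (card Ms * ln (card (UNIV :: 'f set)))"
proof -
  define q where "q = real (card (UNIV :: 'f set))"
  define N where "N = real (card Ms)"
  have q1: "q > 1" using q_ge2[where 'f='f] unfolding q_def by simp
  have N0: "N > 0" using fin ne unfolding N_def by (simp add: card_gt_0_iff)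
  define c where "c a = card {m\<in>Ms. X m = a}" for a
  have cpos: "c a > 0" if "a \<in> X ` Ms" for a
    using that fin unfolding c_def by (auto simp: card_gt_0_iff)
  have "(\<Sum>m\<in>Ms. ln N - ln (cnt Ms X m)) = (\<Sum>m\<in>Ms. ln N - ln (c (X m)))"
    unfolding cnt_def c_def N_def by simp
  also have "\<dots> = (\<Sum>a\<in>X ` Ms. \<Sum>m\<in>{m\<in>Ms. X m = a}. ln N - ln (c (X m)))"
    by (rule sum.image_gen[OF fin])
  also have "\<dots> = (\<Sum>a\<in>X ` Ms. c a * (ln N - ln (c a)))"
    by (rule sum.cong) (auto simp: c_def)
  finally have e1: "(\<Sum>m\<in>Ms. ln N - ln (cnt Ms X m)) = (\<Sum>a\<in>X ` Ms. c a * (ln N - ln (c a)))" .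
  have "ent Ms X = (\<Sum>a\<in>X ` Ms. c a * (ln N - ln (c a)) / (N * ln q))"
    unfolding ent_def sum_negf[symmetric]
  proof (rule sum.cong)
    fix a assume a: "a \<in> X ` Ms"
    have pr: "prb Ms X a = c a / N" unfolding prb_def c_def N_def by simp
    have ln: "ln (c a / N) = ln (c a) - ln N" using cpos[OF a] N0 by (simp add: ln_div)
    show "- (prb Ms X a * log (real (card (UNIV :: 'f set))) (prb Ms X a)) = c a * (ln N - ln (c a)) / (N * ln q)"
      unfolding pr log_def q_def[symmetric] ln using N0 q1 by (simp add: field_simps right_diff_distrib)
  qed simp
  also have "\<dots> = (\<Sum>a\<in>X ` Ms. c a * (ln N - ln (c a))) / (N * ln q)"
    by (simp add: sum_divide_distrib)
  finally show ?thesis using e1 unfolding N_def q_def by simp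
qed

lemma ent_mono:
  fixes Ms :: "'f::{field,finite} list set"
  assumes fin: "finite Ms" and ne: "Ms \<noteq> {}"
    and h: "\<And>m m'. m \<in> Ms \<Longrightarrow> m' \<in> Ms \<Longrightarrow> Y m = Y m' \<Longrightarrow> X m = X m'"
  shows "ent Ms X \<le> ent Ms Y"
proof -
  have q1: "ln (real (card (UNIV :: 'f set))) > 0" using q_ge2[where 'f='f] by simp
  have N0: "real (card Ms) > 0" using fin ne by (simp add: card_gt_0_iff)
  have "ln (cnt Ms Y m) \<le> ln (cnt Ms X m)" if "m \<in> Ms" for m
  proof -
    have a: "cnt Ms Y m \<le> cnt Ms X m"
      unfolding cnt_def by (rule card_mono) (use fin in simp, use that h in blast)
    have b: "1 \<le> cnt Ms Y m" by (rule cnt_pos[OF fin that])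
    show ?thesis using a b by (subst ln_le_cancel_iff) auto
  qed
  then have "(\<Sum>m\<in>Ms. ln (card Ms) - ln (cnt Ms X m)) \<le> (\<Sum>m\<in>Ms. ln (card Ms) - ln (cnt Ms Y m))"
    by (intro sum_mono) auto
  then show ?thesis unfolding ent_alt[OF fin ne]
    by (intro divide_right_mono) (use q1 N0 in auto)
qed

lemma dbl_count:
  assumes fin: "finite Ms"
  shows "(\<Sum>m\<in>Ms. real (cnt Ms X m) * real (cnt Ms Y m) / real (cnt Ms (\<lambda>m. (X m, Y m)) m))
     \<le> real (card Ms) * real (card Ms)"
proof -
  define cp where "cp m = real (cnt Ms (\<lambda>m. (X m, Y m)) m)" for m
  define ind where "ind m1 m2 m = (if X m = X m1 \<and> Y m = Y m2 then 1 else 0::real)" for m1 m2 m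
  have prod: "real (cnt Ms X m) * real (cnt Ms Y m) = (\<Sum>m1\<in>Ms. \<Sum>m2\<in>Ms. ind m1 m2 m)" for m
  proof -
    have "real (cnt Ms X m) = (\<Sum>m1\<in>Ms. if X m1 = X m then 1 else 0)"
      unfolding cnt_def using fin by (subst sum.inter_filter[symmetric]) simp_all
    moreover have "real (cnt Ms Y m) = (\<Sum>m2\<in>Ms. if Y m2 = Y m then 1 else 0)"
      unfolding cnt_def using fin by (subst sum.inter_filter[symmetric]) simp_all
    ultimately have "real (cnt Ms X m) * real (cnt Ms Y m) = (\<Sum>m1\<in>Ms. if X m1 = X m then 1 else 0) * (\<Sum>m2\<in>Ms. if Y m2 = Y m then (1::real) else 0)" by simp
    also have "\<dots> = (\<Sum>m1\<in>Ms. \<Sum>m2\<in>Ms. (if X m1 = X m then 1 else 0) * (if Y m2 = Y m then (1::real) else 0))" by (rule sum_product)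
    also have "\<dots> = (\<Sum>m1\<in>Ms. \<Sum>m2\<in>Ms. ind m1 m2 m)" unfolding ind_def by (intro sum.cong) auto
    finally show ?thesis .
  qed
  have inner: "(\<Sum>m\<in>Ms. ind m1 m2 m / cp m) \<le> 1" for m1 m2
  proof -
    define C where "C = {m\<in>Ms. X m = X m1 \<and> Y m = Y m2}"
    have "(\<Sum>m\<in>Ms. ind m1 m2 m / cp m) = (\<Sum>m\<in>C. 1 / cp m)"
      unfolding C_def ind_def using fin by (auto simp: sum.inter_filter intro!: sum.cong)
    also have "\<dots> = (\<Sum>m\<in>C. 1 / real (card C))"
    proof (rule sum.cong)
      fix m assume "m \<in> C"
      then have "{m'\<in>Ms. (X m', Y m') = (X m, Y m)} = C" unfolding C_def by auto
      then show "1 / cp m = 1 / real (card C)" unfolding cp_def cnt_def by simp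
    qed simp
    also have "\<dots> \<le> 1" by (cases "card C = 0") auto
    finally show ?thesis .
  qed
  have "(\<Sum>m\<in>Ms. real (cnt Ms X m) * real (cnt Ms Y m) / cp m)
      = (\<Sum>m\<in>Ms. \<Sum>m1\<in>Ms. \<Sum>m2\<in>Ms. ind m1 m2 m / cp m)"
    unfolding prod sum_divide_distrib by simp
  also have "\<dots> = (\<Sum>m1\<in>Ms. \<Sum>m\<in>Ms. \<Sum>m2\<in>Ms. ind m1 m2 m / cp m)"
    by (rule sum.swap)
  also have "\<dots> = (\<Sum>m1\<in>Ms. \<Sum>m2\<in>Ms. \<Sum>m\<in>Ms. ind m1 m2 m / cp m)"
    by (rule sum.cong[OF refl], rule sum.swap)
  also have "\<dots> \<le> (\<Sum>m1\<in>Ms. \<Sum>m2\<in>Ms. 1)"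
    by (intro sum_mono inner)
  also have "\<dots> = real (card Ms) * real (card Ms)" by simp
  finally show ?thesis unfolding cp_def .
qed

lemma ent_pair:
  fixes Ms :: "'f::{field,finite} list set"
  assumes fin: "finite Ms" and ne: "Ms \<noteq> {}"
  shows "ent Ms (\<lambda>m. (X m, Y m)) \<le> ent Ms X + ent Ms Y"
proof -
  define L where "L = ln (real (card (UNIV :: 'f set)))"
  have L0: "L > 0" using q_ge2[where 'f='f] unfolding L_def by simp
  define N where "N = real (card Ms)"
  have N0: "N > 0" using fin ne unfolding N_def by (simp add: card_gt_0_iff)
  define a where "a m = real (cnt Ms X m)" for m
  define b where "b m = real (cnt Ms Y m)" for m
  define c where "c m = real (cnt Ms (\<lambda>m. (X m, Y m)) m)" for m
  have pos: "a m \<ge> 1" "b m \<ge> 1" "c m \<ge> 1" if "m \<in> Ms" for m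
    using cnt_pos[OF fin that] unfolding a_def b_def c_def by auto
  have key: "ln (a m) + ln (b m) - ln N - ln (c m) \<le> a m * b m / c m / N - 1" if "m \<in> Ms" for m
  proof -
    have p: "a m * b m / c m / N > 0" using pos[OF that] N0 by simp
    have "ln (a m * b m / c m / N) = ln (a m) + ln (b m) - ln N - ln (c m)"
      using pos[OF that] N0 by (simp add: ln_div ln_mult)
    then show ?thesis using ln_le_minus_one[OF p] by simp
  qed
  have "(\<Sum>m\<in>Ms. ln (a m) + ln (b m) - ln N - ln (c m)) \<le> (\<Sum>m\<in>Ms. a m * b m / c m / N - 1)"
    by (intro sum_mono key)
  also have "\<dots> = (\<Sum>m\<in>Ms. a m * b m / c m) / N - N"
    by (simp add: sum_subtractf sum_divide_distrib N_def)
  also have "\<dots> \<le> 0"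
    using dbl_count[OF fin, of X Y] N0 unfolding a_def b_def c_def N_def[symmetric]
    by (simp add: divide_le_eq)
  finally have s: "(\<Sum>m\<in>Ms. ln N - ln (c m)) \<le> (\<Sum>m\<in>Ms. ln N - ln (a m)) + (\<Sum>m\<in>Ms. ln N - ln (b m))"
    by (simp add: sum_subtractf sum.distrib N_def algebra_simps)
  have "ent Ms (\<lambda>m. (X m, Y m)) = (\<Sum>m\<in>Ms. ln N - ln (c m)) / (N * L)"
    unfolding ent_alt[OF fin ne] c_def N_def L_def ..
  also have "\<dots> \<le> ((\<Sum>m\<in>Ms. ln N - ln (a m)) + (\<Sum>m\<in>Ms. ln N - ln (b m))) / (N * L)"
    by (intro divide_right_mono s) (use N0 L0 in simp)
  also have "\<dots> = ent Ms X + ent Ms Y"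
    unfolding ent_alt[OF fin ne] a_def b_def N_def L_def by (simp add: add_divide_distrib)
  finally show ?thesis .
qed

lemma ent_le_pair:
  fixes Ms :: "'f::{field,finite} list set"
  assumes fin: "finite Ms" and ne: "Ms \<noteq> {}"
    and h: "\<And>m m'. m \<in> Ms \<Longrightarrow> m' \<in> Ms \<Longrightarrow> A m = A m' \<Longrightarrow> C m = C m' \<Longrightarrow> X m = X m'"
  shows "ent Ms X \<le> ent Ms A + ent Ms C"
proof -
  have "ent Ms X \<le> ent Ms (\<lambda>m. (A m, C m))" by (rule ent_mono[OF fin ne]) (auto intro: h)
  also have "\<dots> \<le> ent Ms A + ent Ms C" by (rule ent_pair[OF fin ne])
  finally show ?thesis .
qed

lemma joint_eq_iff: "joint I X m = joint I X m' \<longleftrightarrow> (\<forall>i\<in>I. X i m = X i m')"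
  unfolding joint_def fun_eq_iff by (metis (full_types))

lemma ent_const:
  fixes Ms :: "'f::{field,finite} list set"
  assumes fin: "finite Ms" and ne: "Ms \<noteq> {}" and h: "\<And>m. X m = c"
  shows "ent Ms X = 0"
proof -
  have "cnt Ms X m = card Ms" for m unfolding cnt_def h by simp
  then show ?thesis unfolding ent_alt[OF fin ne] by simp
qed

lemma ent_joint:
  fixes Ms :: "'f::{field,finite} list set"
  assumes fin: "finite Ms" and ne: "Ms \<noteq> {}" and fI: "finite I"
  shows "ent Ms (joint I X) \<le> (\<Sum>i\<in>I. ent Ms (X i))"
  using fI
proof (induction I rule: finite_induct)
  case empty
  have "ent Ms (joint {} X) = 0" by (rule ent_const[OF fin ne]) (simp add: joint_def)
  then show ?case by simp
next
  case (insert i I)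
  have "ent Ms (joint (insert i I) X) \<le> ent Ms (X i) + ent Ms (joint I X)"
    by (rule ent_le_pair[OF fin ne]) (auto simp: joint_eq_iff)
  then show ?case using insert by simp
qed

lemma ent_id:
  "ent (msgs B) (\<lambda>m::'f::{field,finite} list. m) = real B"
proof -
  have ms: "msgs B = {xs. set xs \<subseteq> (UNIV::'f set) \<and> length xs = B}" unfolding msgs_def by blast
  have fin: "finite (msgs B :: 'f list set)" unfolding ms by (rule finite_lists_length_eq) simp
  have cd: "card (msgs B :: 'f list set) = card (UNIV::'f set) ^ B" unfolding ms by (rule card_lists_length_eq) simp
  have q: "card (UNIV::'f set) \<ge> 2" by (rule q_ge2)
  then have ne: "msgs B \<noteq> ({} :: 'f list set)" using cd fin by (auto simp: card_gt_0_iff[symmetric])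
  have c1: "cnt (msgs B) (\<lambda>m::'f list. m) m = 1" if "m \<in> msgs B" for m
  proof -
    have "{m'\<in>msgs B. m' = m} = {m}" using that by auto
    then show ?thesis unfolding cnt_def by simp
  qed
  have "(\<Sum>m\<in>msgs B. ln (real (card (msgs B :: 'f list set))) - ln (real (cnt (msgs B) (\<lambda>m::'f list. m) m)))
     = (\<Sum>m\<in>(msgs B :: 'f list set). ln (real (card (msgs B :: 'f list set))))"
    by (auto intro!: sum.cong simp: c1)
  then show ?thesis unfolding ent_alt[OF fin ne] using q cd fin ne by (simp add: ln_realpow card_gt_0_iff)
qed



theorem proposition1:
  fixes k d p i j B :: nat and \<alpha> \<beta> \<theta> :: real
    and W :: "nat \<Rightarrow> 'f::{field,finite} list \<Rightarrow> 'w"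
    and S :: "nat \<Rightarrow> nat \<Rightarrow> 'f list \<Rightarrow> 's"
  assumes "1 \<le> k" and "k \<le> d"
    and "\<alpha> > 0" and "\<beta> > 0"
    and "ER_code k d \<alpha> \<beta> B W S"
    and "p \<in> {1..k}" and "0 \<le> \<theta>" and "\<theta> < \<beta>" and "p = k \<longrightarrow> \<theta> = 0"
    and "\<alpha> = (real d - real p + 1) * \<beta> - \<theta>"
    and "1 \<le> i" and "i \<le> j" and "j \<le> k"
  shows "ent (msgs B) (joint {(x, y). y \<in> {i..j} \<and> x \<in> {1..d+1} \<and> x > y} (\<lambda>(x, y). S x y))
         \<ge> (\<Sum>l = i..j. min \<alpha> ((real d - real l + 1) * \<beta>)) - (Bhat k d \<alpha> \<beta> - real B)"
proof -
  note k1 = assms(1) and kd = assms(2) and i1 = assms(11) and ij = assms(12) and jk = assms(13)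
  define Ms where "Ms = (msgs B :: 'f list set)"
  define N where "N = {1..d+1}"
  have ms: "Ms = {xs. set xs \<subseteq> (UNIV::'f set) \<and> length xs = B}" unfolding Ms_def msgs_def by blast
  have fin: "finite Ms" unfolding ms by (rule finite_lists_length_eq) simp
  have ne: "Ms \<noteq> {}" unfolding Ms_def msgs_def
    by (metis (mono_tags, lifting) empty_iff length_replicate mem_Collect_eq)
  have code: "(\<forall>i \<in> N. ent Ms (W i) \<le> \<alpha>) \<and>
       (\<forall>K \<subseteq> N. card K = k \<longrightarrow>
          (\<forall>m \<in> Ms. \<forall>m' \<in> Ms. (\<forall>a \<in> K. W a m = W a m') \<longrightarrow> m = m')) \<and>
       (\<forall>x \<in> N. \<forall>y \<in> N. x \<noteq> y \<longrightarrow>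
          (\<forall>m \<in> Ms. \<forall>m' \<in> Ms. W x m = W x m' \<longrightarrow> S x y m = S x y m') \<and>
          ent Ms (S x y) \<le> \<beta>) \<and>
       (\<forall>y \<in> N. \<forall>m \<in> Ms. \<forall>m' \<in> Ms.
          (\<forall>x \<in> N - {y}. S x y m = S x y m') \<longrightarrow> W y m = W y m')"
    using assms(5) unfolding ER_code_def Let_def Ms_def N_def by blast
  have hW: "\<And>i. i \<in> N \<Longrightarrow> ent Ms (W i) \<le> \<alpha>" using code by blast
  have hDC: "\<And>K m m'. K \<subseteq> N \<Longrightarrow> card K = k \<Longrightarrow> m \<in> Ms \<Longrightarrow> m' \<in> Ms \<Longrightarrow> (\<forall>a \<in> K. W a m = W a m') \<Longrightarrow> m = m'"
    using code by blast
  have hF: "\<And>x y m m'. x \<in> N \<Longrightarrow> y \<in> N \<Longrightarrow> x \<noteq> y \<Longrightarrow> m \<in> Ms \<Longrightarrow> m' \<in> Ms \<Longrightarrow> W x m = W x m' \<Longrightarrow> S x y m = S x y m'"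
    using code by blast
  have hSb: "\<And>x y. x \<in> N \<Longrightarrow> y \<in> N \<Longrightarrow> x \<noteq> y \<Longrightarrow> ent Ms (S x y) \<le> \<beta>"
    using code by blast
  have hR: "\<And>y m m'. y \<in> N \<Longrightarrow> m \<in> Ms \<Longrightarrow> m' \<in> Ms \<Longrightarrow> (\<forall>x \<in> N - {y}. S x y m = S x y m') \<Longrightarrow> W y m = W y m'"
    using code by blast
  define h where "h l = ent Ms (joint {1..l} W)" for l
  define mn where "mn l = min \<alpha> ((real d - real l + 1) * \<beta>)" for l
  have stepA: "h l \<le> h (l - 1) + mn l" if l1: "1 \<le> l" and ld: "l \<le> d" for l
  proof -
    have lN: "l \<in> N" unfolding N_def using l1 ld by simp
    have A1: "h l \<le> h (l - 1) + ent Ms (W l)"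
      unfolding h_def
    proof (rule ent_le_pair[OF fin ne])
      fix m m' assume a: "joint {1..l-1} W m = joint {1..l-1} W m'" and b: "W l m = W l m'"
      show "joint {1..l} W m = joint {1..l} W m'"
        unfolding joint_eq_iff
      proof
        fix x assume x: "x \<in> {1..l}"
        show "W x m = W x m'"
        proof (cases "x = l")
          case True then show ?thesis using b by simp
        next
          case False then have "x \<in> {1..l-1}" using x by auto
          then show ?thesis using a unfolding joint_eq_iff by blast
        qed
      qed
    qed
    have A2: "h l \<le> h (l - 1) + ent Ms (joint {l+1..d+1} (\<lambda>x. S x l))"
      unfolding h_def
    proof (rule ent_le_pair[OF fin ne])
      fix m m' assume mm: "m \<in> Ms" "m' \<in> Ms"
        and a: "joint {1..l-1} W m = joint {1..l-1} W m'"
        and b: "joint {l+1..d+1} (\<lambda>x. S x l) m = joint {l+1..d+1} (\<lambda>x. S x l) m'"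
      have a': "W x m = W x m'" if "1 \<le> x" "x < l" for x
        using a that unfolding joint_eq_iff by auto
      have b': "S x l m = S x l m'" if "l < x" "x \<le> d+1" for x
        using b that unfolding joint_eq_iff by auto
      have "W l m = W l m'"
      proof (rule hR[OF lN mm], intro ballI)
        fix x assume x: "x \<in> N - {l}"
        show "S x l m = S x l m'"
        proof (cases "x < l")
          case True
          then show ?thesis using x a' hF[OF _ lN _ mm] unfolding N_def by auto
        next
          case False
          then show ?thesis using x b' unfolding N_def by auto
        qed
      qed
      then show "joint {1..l} W m = joint {1..l} W m'"
        using a' unfolding joint_eq_iff
        by (auto simp: order.order_iff_strict)
    qed
    have "ent Ms (joint {l+1..d+1} (\<lambda>x. S x l)) \<le> (\<Sum>x\<in>{l+1..d+1}. ent Ms (S x l))"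
      by (rule ent_joint[OF fin ne]) simp
    also have "\<dots> \<le> (\<Sum>x\<in>{l+1..d+1}. \<beta>)"
      by (rule sum_mono, rule hSb) (use l1 lN in \<open>auto simp: N_def\<close>)
    also have "\<dots> = (real d - real l + 1) * \<beta>" using ld by (simp add: of_nat_diff)
    finally have A3: "ent Ms (joint {l+1..d+1} (\<lambda>x. S x l)) \<le> (real d - real l + 1) * \<beta>" .
    have "h l \<le> h (l - 1) + \<alpha>" using A1 hW[OF lN] by linarith
    moreover have "h l \<le> h (l - 1) + (real d - real l + 1) * \<beta>" using A2 A3 by linarith
    ultimately show ?thesis unfolding mn_def by (simp add: min_def)
  qed
  have tele: "\<forall>a. a \<le> b \<longrightarrow> b \<le> k \<longrightarrow> h b \<le> h a + (\<Sum>l=a+1..b. mn l)" for b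
  proof (induction b)
    case 0
    then show ?case by simp
  next
    case (Suc b)
    show ?case
    proof (intro allI impI)
      fix a assume a: "a \<le> Suc b" "Suc b \<le> k"
      show "h (Suc b) \<le> h a + (\<Sum>l=a+1..Suc b. mn l)"
      proof (cases "a = Suc b")
        case True
        then show ?thesis by simp
      next
        case False
        then have ab: "a \<le> b" using a by simp
        have "h b \<le> h a + (\<Sum>l=a+1..b. mn l)" using Suc.IH ab a by simp
        moreover have "h (Suc b) \<le> h b + mn (Suc b)" using stepA[of "Suc b"] a kd by simp
        moreover have "(\<Sum>l=a+1..Suc b. mn l) = (\<Sum>l=a+1..b. mn l) + mn (Suc b)"
          using ab by (simp add: sum.cl_ivl_Suc)
        ultimately show ?thesis by linarith
      qed
    qed
  qed
  have h0: "h 0 = 0" unfolding h_def by (rule ent_const[OF fin ne]) (simp add: joint_def)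
  define SS where "SS = joint {(x, y). y \<in> {i..j} \<and> x \<in> {1..d+1} \<and> x > y} (\<lambda>(x, y). S x y)"
  have stepB: "h j \<le> h (i - 1) + ent Ms SS"
    unfolding h_def
  proof (rule ent_le_pair[OF fin ne])
    fix m m' assume mm: "m \<in> Ms" "m' \<in> Ms"
      and a: "joint {1..i-1} W m = joint {1..i-1} W m'"
      and b: "SS m = SS m'"
    have a': "W x m = W x m'" if "1 \<le> x" "x < i" for x
      using a that unfolding joint_eq_iff by auto
    have b': "S x y m = S x y m'" if "i \<le> y" "y \<le> j" "y < x" "x \<le> d+1" for x y
      using b that unfolding SS_def joint_eq_iff by auto
    have "\<forall>a. 1 \<le> a \<longrightarrow> a \<le> j \<longrightarrow> W a m = W a m'" for t :: nat
    proof (intro allI)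
      fix a show "1 \<le> a \<longrightarrow> a \<le> j \<longrightarrow> W a m = W a m'"
      proof (induction a rule: less_induct)
        case (less a)
        show ?case
        proof (intro impI)
          assume a1: "1 \<le> a" and aj: "a \<le> j"
          show "W a m = W a m'"
          proof (cases "a < i")
            case True then show ?thesis using a' a1 by simp
          next
            case False
            have aN: "a \<in> N" unfolding N_def using a1 aj jk kd by simp
            show ?thesis
            proof (rule hR[OF aN mm], intro ballI)
              fix x assume x: "x \<in> N - {a}"
              show "S x a m = S x a m'"
              proof (cases "x < a")
                case True
                have "W x m = W x m'" using less.IH[OF True] True aj x unfolding N_def by auto
                then show ?thesis using x hF[OF _ aN _ mm] by auto
              next
                case False2: False
                then show ?thesis using x b' False aj unfolding N_def by auto
              qed
            qed
          qed
        qed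
      qed
    qed
    then show "joint {1..j} W m = joint {1..j} W m'" unfolding joint_eq_iff by auto
  qed
  have stepC: "real B \<le> h k"
  proof -
    have "ent Ms (\<lambda>m. m) \<le> h k" unfolding h_def
    proof (rule ent_mono[OF fin ne])
      fix m m' assume mm: "m \<in> Ms" "m' \<in> Ms" and e: "joint {1..k} W m = joint {1..k} W m'"
      show "m = m'"
        by (rule hDC[of "{1..k}"]) (use mm e kd in \<open>auto simp: N_def joint_eq_iff\<close>)
    qed
    then show ?thesis using ent_id[where B=B and 'f='f] unfolding Ms_def by simp
  qed
  have t1: "h k \<le> h j + (\<Sum>l=j+1..k. mn l)" using tele[of k] jk by simp
  have t2: "h (i-1) \<le> (\<Sum>l=1..i-1. mn l)" using tele[of "i-1", rule_format, of 0] h0 jk ij by simp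
  have split1: "(\<Sum>l=1..k. mn l) = (\<Sum>l=1..j. mn l) + (\<Sum>l=j+1..k. mn l)"
    using sum.ub_add_nat[of 1 j mn "k - j"] jk i1 ij by simp
  have split2: "(\<Sum>l=1..j. mn l) = (\<Sum>l=1..i-1. mn l) + (\<Sum>l=i..j. mn l)"
    using sum.ub_add_nat[of 1 "i-1" mn "j - (i-1)"] jk i1 ij by simp
  have bh: "Bhat k d \<alpha> \<beta> = (\<Sum>l=1..k. mn l)" unfolding Bhat_def mn_def ..
  show ?thesis
    using stepB stepC t1 t2 split1 split2 bh unfolding SS_def[symmetric] Ms_def[symmetric] mn_def[symmetric]
    by linarith
qed

end
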